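(* Let $\Delta>0$ be fixed and let $D_\theta \coloneqq \{\eta + iy \mid \eta > 0,\ |y| \leq \Delta \eta\}$. Let $0 < a \leq 1$. Then \[ \sum_{m \geq 0} E_\times((m+a)z) = -\frac{\log z}{z} - \frac{\psi(a)}{z} + O(1) \] as $z \to 0$ uniformly in $D_\theta$.
   Context: $E_\times(z) \coloneqq \frac{e^{-z}}{1-e^{-z}}$; $\psi=\Gamma'/\Gamma$ is the digamma function; $\log$ is the principal branch. *)

theory Defs
  imports "HOL-Analysis.Analysis" "HOL-Library.Landau_Symbols"
begin

definition E_times :: "complex \<Rightarrow> complex" where
  "E_times z = exp (- z) / (1 - exp (- z))"

definition sector_D :: "real \<Rightarrow> complex set" where
  "sector_D \<Delta> = {z. Re z > 0 \<and> \<bar>Im z\<bar> \<le> \<Delta> * Re z}"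

end

theory Submission
  imports Defs "HOL-Complex_Analysis.Complex_Analysis"
begin


definition qf :: "complex \<Rightarrow> complex" where
  "qf v = (if v = 0 then 1 else (1 - exp (-v)) / v)"

lemma qf_tendsto0: "(qf \<longlongrightarrow> 1) (at 0)"
proof -
  have "((\<lambda>v. 1 - exp(-v)) has_field_derivative 1) (at (0::complex))"
    by (auto intro!: derivative_eq_intros)
  then have "((\<lambda>h. ((1 - exp(-(0+h))) - (1 - exp(-0))) / h) \<longlongrightarrow> 1) (at (0::complex))"
    by (simp add: DERIV_def)
  then have *: "((\<lambda>h. (1 - exp(-h)) / h) \<longlongrightarrow> 1) (at (0::complex))" by simp
  have "\<forall>\<^sub>F v in at 0. (1 - exp(-v))/v = qf v"
    by (auto simp: eventually_at_filter qf_def)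
  with * show ?thesis by (rule Lim_transform_eventually)
qed

lemma qf_deriv:
  assumes "v \<noteq> 0"
  shows "(qf has_field_derivative (exp(-v) * v - (1 - exp(-v)))/v^2) (at v)"
proof -
  have "((\<lambda>v. (1 - exp(-v))/v) has_field_derivative (exp(-v) * v - (1 - exp(-v)))/v^2) (at v)"
    using assms by (auto intro!: derivative_eq_intros simp: power2_eq_square)
  then show ?thesis
    by (rule has_field_derivative_transform_within_open[where S="UNIV - {0}"]) (use assms in \<open>auto simp: qf_def\<close>)
qed

lemma qf_holo: "qf holomorphic_on UNIV"
proof (rule no_isolated_singularity'[where K="{0}"])
  show "(qf \<longlongrightarrow> qf z) (at z within UNIV)" if "z \<in> {0}" for z
    using that qf_tendsto0 by (simp add: qf_def)
  show "qf holomorphic_on UNIV - {0}"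
    unfolding holomorphic_on_def field_differentiable_def
  proof
    fix x assume "x \<in> UNIV - {0::complex}"
    then have "(qf has_field_derivative (exp(-x) * x - (1 - exp(-x)))/x^2) (at x)" by (intro qf_deriv) auto
    then show "\<exists>f'. (qf has_field_derivative f') (at x within UNIV - {0})"
      using has_field_derivative_at_within by blast
  qed
qed auto

lemma qf_nz:
  assumes "norm v < 2*pi" shows "qf v \<noteq> 0"
proof
  assume q: "qf v = 0"
  then have v: "v \<noteq> 0" by (auto simp: qf_def)
  with q have "exp (-v) = 1" by (auto simp: qf_def)
  then obtain n :: int where n: "Re v = 0" "Im (-v) = 2 * pi * n" by (auto simp: exp_eq_1)
  with v have "n \<noteq> 0" by (auto simp: complex_eq_iff)
  then have "1 \<le> \<bar>real_of_int n\<bar>" by linarith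
  have "\<bar>Im v\<bar> = 2*pi*\<bar>real_of_int n\<bar>" 
  proof -
    have "\<bar>Im v\<bar> = \<bar>- Im v\<bar>" by simp
    also have "\<dots> = 2*pi*\<bar>real_of_int n\<bar>" using n by (simp add: abs_mult)
    finally show ?thesis .
  qed
  moreover have "2*pi*1 \<le> 2*pi*\<bar>real_of_int n\<bar>"
    using \<open>1 \<le> _\<close> by (intro mult_left_mono) auto
  ultimately have "2*pi \<le> \<bar>Im v\<bar>" by linarith
  also have "\<dots> \<le> norm v" by (rule abs_Im_le_cmod)
  finally show False using assms by linarith
qed

lemma cont_bound:
  fixes f :: "complex \<Rightarrow> complex"
  assumes "continuous_on S f" "compact S"
  shows "\<exists>B. \<forall>x\<in>S. norm (f x) \<le> B"
proof -
  have "bounded (f ` S)" by (rule compact_imp_bounded[OF compact_continuous_image[OF assms]])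
  then show ?thesis by (auto simp: bounded_iff)
qed

lemma qf_bounds:
  "\<exists>c M1 M2. c > 0 \<and> (\<forall>v\<in>cball 0 3. c \<le> norm (qf v) \<and> norm (deriv qf v) \<le> M1
       \<and> norm (deriv (deriv qf) v) \<le> M2)"
proof -
  have h0: "qf holomorphic_on UNIV" by (rule qf_holo)
  have h1: "deriv qf holomorphic_on UNIV" by (rule holomorphic_deriv[OF h0]) auto
  have h2: "deriv (deriv qf) holomorphic_on UNIV" by (rule holomorphic_deriv[OF h1]) auto
  have c0: "continuous_on (cball 0 3) qf"
    using holomorphic_on_imp_continuous_on[OF h0] continuous_on_subset by blast
  have c1: "continuous_on (cball 0 3) (deriv qf)"
    using holomorphic_on_imp_continuous_on[OF h1] continuous_on_subset by blast
  have c2: "continuous_on (cball 0 3) (deriv (deriv qf))"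
    using holomorphic_on_imp_continuous_on[OF h2] continuous_on_subset by blast
  obtain M1 where M1: "\<forall>x\<in>cball 0 3. norm (deriv qf x) \<le> M1" using cont_bound[OF c1] by auto
  obtain M2 where M2: "\<forall>x\<in>cball 0 3. norm (deriv (deriv qf) x) \<le> M2" using cont_bound[OF c2] by auto
  have "continuous_on (cball 0 3) (\<lambda>v. norm (qf v))" by (intro continuous_intros c0)
  then obtain x0 where x0: "x0 \<in> cball 0 3" "\<forall>y\<in>cball 0 3. norm (qf x0) \<le> norm (qf y)"
    using continuous_attains_inf[of "cball (0::complex) 3" "\<lambda>v. norm (qf v)"] by auto
  have "norm x0 < 2 * pi" using x0(1) pi_gt3 by auto
  then have "qf x0 \<noteq> 0" by (rule qf_nz)
  then have "norm (qf x0) > 0" by simp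
  with x0 M1 M2 show ?thesis by blast
qed

lemma taylor1:
  fixes F f f' :: "complex \<Rightarrow> complex"
  assumes "convex S"
    and "\<And>x. x\<in>S \<Longrightarrow> (F has_field_derivative f x) (at x within S)"
    and "\<And>x. x\<in>S \<Longrightarrow> (f has_field_derivative f' x) (at x within S)"
    and "\<And>x. x\<in>S \<Longrightarrow> norm (f' x) \<le> B" and "w\<in>S" "u\<in>S"
  shows "norm (F u - F w - f w * (u - w)) \<le> B * norm (u-w)^2"
proof -
  define g where "g = (\<lambda>i::nat. if i = 0 then F else if i = 1 then f else f')"
  have "cmod(g 0 u - (\<Sum>i\<le>Suc 0. g i w * (u-w)^i / fact i)) \<le> B * cmod(u-w)^(Suc (Suc 0)) / fact (Suc 0)"
  proof (rule complex_Taylor[of S "Suc 0" g])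
    fix i x assume "x \<in> S" "i \<le> Suc 0"
    then show "(g i has_field_derivative g (Suc i) x) (at x within S)"
      using assms(2,3) by (cases i) (auto simp: g_def)
  next
    fix x assume "x \<in> S"
    then show "cmod (g (Suc (Suc 0)) x) \<le> B" using assms(4) by (simp add: g_def)
  qed (use assms in auto)
  then have h: "cmod (F u - (F w + f w * (u - w))) \<le> B * (cmod (u - w) * cmod (u - w))" by (simp add: g_def)
  have eq: "F u - F w - f w * (u - w) = F u - (F w + f w * (u - w))" by (simp add: algebra_simps)
  show ?thesis unfolding eq power2_eq_square by (rule h)
qed

lemma Re_pos_not_nonpos: "Re z > 0 \<Longrightarrow> z \<notin> \<real>\<^sub>\<le>\<^sub>0"
  by (auto simp: complex_nonpos_Reals_iff)

lemma norm_exp_minus_lt: "Re w > 0 \<Longrightarrow> norm (exp (- w)) < 1"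
  by simp

lemma Re_one_minus_exp: "Re w > 0 \<Longrightarrow> Re (1 - exp (- w)) > 0"
proof -
  assume assms: "Re w > 0"
  have a: "Re (exp (-w)) \<le> norm (exp (-w))" by (rule complex_Re_le_cmod)
  have b: "norm (exp (-w)) = exp (- Re w)" by simp
  have c: "exp (- Re w) < 1" using assms by simp
  have d: "Re (1 - exp(-w)) = 1 - Re(exp(-w))" by simp
  from a b c d show ?thesis by linarith
qed

lemma f1_eq:
  assumes "Re w > 0"
  shows "deriv qf w / qf w = E_times w - 1/w"
proof -
  have w: "w \<noteq> 0" using assms by auto
  have d: "deriv qf w = (exp(-w) * w - (1 - exp(-w)))/w^2"
    using qf_deriv[OF w] by (rule DERIV_imp_deriv)
  have e: "1 - exp (-w) \<noteq> 0" using Re_one_minus_exp[OF assms] by auto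
  show ?thesis using w e
    by (simp add: d qf_def E_times_def field_simps power2_eq_square)
qed

definition HH :: "complex \<Rightarrow> complex" where
  "HH w = Ln (1 - exp (-w)) - Ln w"

lemma HH_deriv:
  assumes "Re w > 0"
  shows "(HH has_field_derivative (E_times w - 1/w)) (at w)"
proof -
  have "(HH has_field_derivative (exp (-w) * inverse (1 - exp (-w)) - inverse w)) (at w)"
    unfolding HH_def
    by (rule derivative_eq_intros refl Re_pos_not_nonpos Re_one_minus_exp assms | simp)+
  then show ?thesis by (simp add: E_times_def field_simps)
qed

lemma G_deriv:
  assumes "Re w > 0"
  shows "((\<lambda>w. Ln (1 - exp (-w))) has_field_derivative E_times w) (at w)"
proof -
  have "((\<lambda>w. Ln (1 - exp (-w))) has_field_derivative (exp (-w) * inverse (1 - exp (-w)))) (at w)"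
    by (rule derivative_eq_intros refl Re_pos_not_nonpos Re_one_minus_exp assms | simp)+
  then show ?thesis by (simp add: E_times_def field_simps)
qed

lemma E_deriv:
  assumes "Re w > 0"
  shows "(E_times has_field_derivative (- exp (-w) / (1 - exp (-w))^2)) (at w)"
proof -
  have e: "1 - exp (-w) \<noteq> 0" using Re_one_minus_exp[OF assms] by auto
  have "((\<lambda>w. exp (- w) / (1 - exp (- w))) has_field_derivative (- exp (-w) / (1 - exp (-w))^2)) (at w)"
    by (rule derivative_eq_intros refl | use e in \<open>simp add: field_simps power2_eq_square\<close>)+
  then show ?thesis unfolding E_times_def[abs_def] .
qed




lemma Digamma_shift:
  fixes z :: complex
  assumes "Re z > 0"
  shows "Digamma (z + of_nat N) = Digamma z + (\<Sum>m<N. 1 / (of_nat m + z))"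
proof (induction N)
  case 0
  then show ?case by simp
next
  case (Suc N)
  have nz: "z + of_nat N \<noteq> 0"
  proof
    assume "z + of_nat N = 0"
    then have "Re (z + of_nat N) = 0" by simp
    with assms show False by simp
  qed
  have "Digamma (z + of_nat (Suc N)) = Digamma ((z + of_nat N) + 1)" by (simp add: ac_simps)
  also have "\<dots> = Digamma (z + of_nat N) + 1 / (z + of_nat N)" by (rule Digamma_plus1[OF nz])
  finally show ?case using Suc by (simp add: add.commute)
qed

lemma ln_ratio_lim:
  fixes B :: real assumes "B > 0"
  shows "(\<lambda>m. ln (real m) - ln (B + real m)) \<longlonglongrightarrow> 0"
proof -
  have "(\<lambda>m. B / real m) \<longlonglongrightarrow> 0" by (rule lim_const_over_n)
  then have "(\<lambda>m. ln (1 + B / real m)) \<longlonglongrightarrow> ln (1 + 0)"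
    by (intro tendsto_intros) auto
  then have "(\<lambda>m. - ln (1 + B / real m)) \<longlonglongrightarrow> 0"
    using tendsto_minus by fastforce
  moreover have "\<forall>\<^sub>F m in sequentially. - ln (1 + B / real m) = ln (real m) - ln (B + real m)"
  proof (rule eventually_sequentiallyI[of 1])
    fix m :: nat assume "1 \<le> m"
    then have m: "real m > 0" by simp
    have "1 + B / real m = (B + real m) / real m" using m by (simp add: field_simps)
    then have "ln (1 + B / real m) = ln (B + real m) - ln (real m)"
      using m assms by (simp add: ln_div)
    then show "- ln (1 + B / real m) = ln (real m) - ln (B + real m)" by simp
  qed
  ultimately show ?thesis by (rule Lim_transform_eventually)
qed

lemma Digamma_real_bounds:
  fixes A :: real
  assumes A: "A > 1"
  shows "ln (A - 1) \<le> Digamma A \<and> Digamma A \<le> ln A"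
proof -
  have L: "(\<lambda>m. ln (real m) - (\<Sum>n<m. inverse (A + of_nat n))) \<longlonglongrightarrow> Digamma A"
    using Digamma_LIMSEQ[of A] A by simp
  have up1: "ln (x + 1) - ln x \<le> inverse x" if "x > 0" for x :: real
  proof -
    have "ln ((x+1)/x) \<le> (x+1)/x - 1" using that by (intro ln_le_minus_one) auto
    then show ?thesis using that by (simp add: ln_div field_simps)
  qed
  have lo1: "inverse x \<le> ln x - ln (x - 1)" if "x > 1" for x :: real
  proof -
    have "ln ((x-1)/x) \<le> (x-1)/x - 1" using that by (intro ln_le_minus_one) auto
    then show ?thesis using that by (simp add: ln_div field_simps)
  qed
  have sumup: "ln (A + real m) - ln A \<le> (\<Sum>n<m. inverse (A + of_nat n))" for m
  proof -
    have "ln (A + real m) - ln A = (\<Sum>n<m. ln (A + real (Suc n)) - ln (A + real n))"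
      by (subst sum_lessThan_telescope) simp
    also have "\<dots> \<le> (\<Sum>n<m. inverse (A + of_nat n))"
    proof (intro sum_mono)
      fix n assume "n \<in> {..<m}"
      have "ln (A + real n + 1) - ln (A + real n) \<le> inverse (A + real n)" using A by (intro up1) auto
      then show "ln (A + real (Suc n)) - ln (A + real n) \<le> inverse (A + of_nat n)" by (simp add: algebra_simps)
    qed
    finally show ?thesis .
  qed
  have sumlo: "(\<Sum>n<m. inverse (A + of_nat n)) \<le> ln (A - 1 + real m) - ln (A - 1)" for m
  proof -
    have "(\<Sum>n<m. inverse (A + of_nat n)) \<le> (\<Sum>n<m. ln (A - 1 + real (Suc n)) - ln (A - 1 + real n))"
      using lo1 A by (intro sum_mono) (simp add: algebra_simps)
    also have "\<dots> = ln (A - 1 + real m) - ln (A - 1)"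
      by (subst sum_lessThan_telescope) simp
    finally show ?thesis .
  qed
  have "Digamma A \<le> ln A"
  proof (rule LIMSEQ_le_const2[OF L])
    show "\<exists>N. \<forall>n\<ge>N. ln (real n) - (\<Sum>n<n. inverse (A + of_nat n)) \<le> ln A"
    proof (intro exI allI impI)
      fix n :: nat assume "1 \<le> n"
      have "ln (real n) \<le> ln (A + real n)" using \<open>1 \<le> n\<close> A by simp
      then show "ln (real n) - (\<Sum>n<n. inverse (A + of_nat n)) \<le> ln A" using sumup[of n] by linarith
    qed
  qed
  moreover have "ln (A - 1) \<le> Digamma A"
  proof (rule LIMSEQ_le[OF _ L])
    show "(\<lambda>m. ln (real m) - ln (A - 1 + real m) + ln (A - 1)) \<longlonglongrightarrow> ln (A - 1)"
      using tendsto_add[OF ln_ratio_lim[of "A - 1"] tendsto_const[of "ln (A - 1)"]] A by simp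
    show "\<exists>N. \<forall>n\<ge>N. ln (real n) - ln (A - 1 + real n) + ln (A - 1) \<le> ln (real n) - (\<Sum>n<n. inverse (A + of_nat n))"
      using sumlo by (intro exI[of _ 0]) (auto simp: algebra_simps)
  qed
  ultimately show ?thesis by simp
qed




lemma norm_one_minus_exp_ge:
  assumes "Re x \<ge> c"
  shows "1 - exp (-c) \<le> norm (1 - exp (-x))"
proof -
  have "1 - norm (exp (-x)) \<le> norm (1 - exp (-x))" using norm_triangle_ineq2[of 1 "exp (-x)"] by simp
  moreover have "norm (exp (-x)) = exp (- Re x)" by simp
  moreover have "exp (- Re x) \<le> exp (-c)" using assms by simp
  ultimately show ?thesis by linarith
qed

lemma tail_est:
  fixes z :: complex and a c :: real and N :: nat
  assumes z: "Re z > 0" and a: "a > 0" and c: "c > 0" and Nc: "(real N + a) * Re z \<ge> c"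
  defines "w \<equiv> \<lambda>m::nat. (of_nat m + complex_of_real a) * z"
  shows "summable (\<lambda>j. E_times (w (j + N))) \<and>
         norm (z * (\<Sum>j. E_times (w (j + N))) + Ln (1 - exp (- w N)))
           \<le> norm z ^ 2 / (1 - exp (-c))^2 / (1 - exp (- Re z))"
proof -
  define G where "G = (\<lambda>w. Ln (1 - exp (-w)))"
  define \<kappa> where "\<kappa> = 1 - exp (-c)"
  have \<kappa>: "\<kappa> > 0" using c by (simp add: \<kappa>_def)
  define r where "r = exp (- Re z)"
  have r: "0 < r" "r < 1" using z by (auto simp: r_def)
  define K where "K = norm z ^ 2 / \<kappa>^2"
  have Rew: "Re (w m) = (real m + a) * Re z" for m by (simp add: w_def)
  define e where "e = (\<lambda>j. G (w (Suc j + N)) - G (w (j + N)) - z * E_times (w (j + N)))"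
  have ebound: "norm (e j) \<le> K * r ^ j" for j
  proof -
    define t where "t = Re (w (j + N))"
    have t: "t \<ge> c" using Nc z a unfolding t_def Rew
      by (smt (verit, ccfv_SIG) of_nat_add mult_right_mono of_nat_0_le_iff)
    define S where "S = {x. Re x \<ge> t}"
    have cvx: "convex S" unfolding S_def by (rule convex_halfspace_Re_ge)
    have Spos: "Re x > 0" if "x \<in> S" for x using that t c by (auto simp: S_def)
    have "norm (G (w (j + N) + z) - G (w (j + N)) - E_times (w (j + N)) * (w (j + N) + z - w (j + N)))
          \<le> (exp (-t) / \<kappa>^2) * norm (w (j + N) + z - w (j + N))^2"
    proof (rule taylor1[OF cvx])
      fix x assume "x \<in> S"
      then show "(G has_field_derivative E_times x) (at x within S)"
        unfolding G_def using G_deriv[OF Spos] has_field_derivative_at_within by blast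
      show "(E_times has_field_derivative (- exp (-x) / (1 - exp (-x))^2)) (at x within S)"
        using E_deriv[OF Spos[OF \<open>x \<in> S\<close>]] has_field_derivative_at_within by blast
      have "Re x \<ge> t" using \<open>x \<in> S\<close> by (simp add: S_def)
      have n1: "\<kappa> \<le> norm (1 - exp (-x))"
        unfolding \<kappa>_def using \<open>Re x \<ge> t\<close> t by (intro norm_one_minus_exp_ge) auto
      have "norm (- exp (-x) / (1 - exp (-x))^2) = exp (- Re x) / norm (1 - exp (-x))^2"
        by (simp add: norm_divide norm_power)
      also have "\<dots> \<le> exp (-t) / \<kappa>^2"
        using n1 \<kappa> \<open>Re x \<ge> t\<close> by (intro frac_le power_mono) auto
      finally show "norm (- exp (-x) / (1 - exp (-x))^2) \<le> exp (-t) / \<kappa>^2" .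
    next
      show "w (j + N) \<in> S" by (simp add: S_def t_def)
      show "w (j + N) + z \<in> S" using z by (simp add: S_def t_def)
    qed
    moreover have "w (j + N) + z = w (Suc j + N)" by (simp add: w_def algebra_simps)
    ultimately have "norm (e j) \<le> (exp (-t) / \<kappa>^2) * norm z ^ 2"
      by (simp add: e_def algebra_simps)
    also have "exp (-t) \<le> r ^ j"
    proof -
      have "real j * Re z \<le> t" unfolding t_def Rew using a z by (simp add: algebra_simps)
      then have "exp (-t) \<le> exp (- (real j * Re z))" by simp
      also have "\<dots> = r ^ j" by (simp add: r_def flip: exp_of_nat_mult)
      finally show ?thesis .
    qed
    then have "(exp (-t) / \<kappa>^2) * norm z ^ 2 \<le> (r ^ j / \<kappa>^2) * norm z ^ 2"
      by (intro mult_right_mono divide_right_mono) auto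
    finally show ?thesis by (simp add: K_def algebra_simps)
  qed
  have sg: "summable (\<lambda>j. K * r ^ j)" using r by (intro summable_mult summable_geometric) auto
  have se: "summable e" by (rule summable_comparison_test'[OF sg]) (use ebound in auto)
  have sne: "summable (\<lambda>j. norm (e j))" by (rule summable_comparison_test'[OF sg]) (use ebound in auto)
  have "(\<Sum>j. norm (e j)) \<le> (\<Sum>j. K * r ^ j)" by (rule suminf_le[OF _ sne sg]) (use ebound in auto)
  also have "\<dots> = K / (1 - r)" using r by (simp add: suminf_mult suminf_geometric)
  finally have sumbound: "norm (\<Sum>j. e j) \<le> K / (1 - r)"
    using summable_norm[OF sne] by linarith
  have Glim: "(\<lambda>j. G (w (j + N))) \<longlonglongrightarrow> 0"
  proof -
    have "(\<lambda>j. exp (- w (j + N))) \<longlonglongrightarrow> 0"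
    proof (rule Lim_null_comparison)
      show "\<forall>\<^sub>F j in sequentially. norm (exp (- w (j + N))) \<le> r ^ j"
      proof (intro always_eventually allI)
        fix j
        have "real j * Re z \<le> Re (w (j + N))" unfolding Rew using a z by (simp add: algebra_simps)
        then have "exp (- Re (w (j + N))) \<le> exp (- (real j * Re z))" by simp
        also have "\<dots> = r ^ j" by (simp add: r_def flip: exp_of_nat_mult)
        finally show "norm (exp (- w (j + N))) \<le> r ^ j" by simp
      qed
      show "(\<lambda>j. r ^ j) \<longlonglongrightarrow> 0" using r by (intro LIMSEQ_power_zero) auto
    qed
    then have "(\<lambda>j. Ln (1 - exp (- w (j + N)))) \<longlonglongrightarrow> Ln (1 - 0)"
      by (intro tendsto_intros) auto
    then show ?thesis by (simp add: G_def)
  qed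
  have tel: "(\<lambda>j. G (w (Suc j + N)) - G (w (j + N))) sums (0 - G (w (0 + N)))"
    using telescope_sums[OF Glim] by simp
  have zE: "z * E_times (w (j + N)) = (G (w (Suc j + N)) - G (w (j + N))) - e j" for j
    by (simp add: e_def)
  have sums1: "(\<lambda>j. z * E_times (w (j + N))) sums ((0 - G (w N)) - (\<Sum>j. e j))"
    unfolding zE using sums_diff[OF tel summable_sums[OF se]] by simp
  have zne: "z \<noteq> 0" using z by auto
  have sums2: "(\<lambda>j. E_times (w (j + N))) sums (((0 - G (w N)) - (\<Sum>j. e j)) / z)"
    using sums_divide[OF sums1, of z] zne by simp
  have "z * (\<Sum>j. E_times (w (j + N))) + G (w N) = - (\<Sum>j. e j)"
  proof -
    have "suminf e + z * (\<Sum>j. E_times (w (j + N))) = - G (w N)"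
      using sums2 zne by (simp add: sums_iff field_simps)
    then show ?thesis by (simp add: eq_neg_iff_add_eq_0 algebra_simps)
  qed
  then have "norm (z * (\<Sum>j. E_times (w (j + N))) + G (w N)) \<le> K / (1 - r)"
    using sumbound by simp
  then show ?thesis using sums2 by (auto simp: sums_iff G_def K_def \<kappa>_def r_def)
qed




definition f1 :: "complex \<Rightarrow> complex" where
  "f1 x = deriv qf x / qf x"

definition f2 :: "complex \<Rightarrow> complex" where
  "f2 x = deriv (deriv qf) x / qf x - (deriv qf x / qf x)^2"

lemma qf_nz3: "norm x \<le> 3 \<Longrightarrow> qf x \<noteq> 0"
  using pi_gt3 by (intro qf_nz) auto

lemma f1_deriv:
  assumes "norm x \<le> 3"
  shows "(f1 has_field_derivative f2 x) (at x)"
proof -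
  have h0: "qf holomorphic_on UNIV" by (rule qf_holo)
  have h1: "deriv qf holomorphic_on UNIV" by (rule holomorphic_deriv[OF h0]) auto
  have d0: "(qf has_field_derivative deriv qf x) (at x)" by (rule holomorphic_derivI[OF h0]) auto
  have d1: "(deriv qf has_field_derivative deriv (deriv qf) x) (at x)" by (rule holomorphic_derivI[OF h1]) auto
  have nz: "qf x \<noteq> 0" using assms by (rule qf_nz3)
  have "((\<lambda>x. deriv qf x / qf x) has_field_derivative
        (deriv (deriv qf) x * qf x - deriv qf x * deriv qf x) / (qf x * qf x)) (at x)"
    by (rule DERIV_divide[OF d1 d0 nz])
  moreover have "(deriv (deriv qf) x * qf x - deriv qf x * deriv qf x) / (qf x * qf x) = f2 x"
    using nz by (simp add: f2_def field_simps power2_eq_square)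
  ultimately show ?thesis unfolding f1_def[abs_def] by simp
qed

lemma f2_bound:
  "\<exists>B M1. M1 \<ge> 0 \<and> (\<forall>x\<in>cball 0 3. norm (f2 x) \<le> B \<and> norm (deriv qf x) \<le> M1)"
proof -
  obtain c M1 M2 where c: "c > 0" and b: "\<forall>v\<in>cball 0 3. c \<le> norm (qf v) \<and> norm (deriv qf v) \<le> M1
       \<and> norm (deriv (deriv qf) v) \<le> M2"
    using qf_bounds by blast
  have "norm (deriv qf 0) \<le> M1" using b by auto
  then have M1: "M1 \<ge> 0" by (rule order_trans[OF norm_ge_zero])
  have "norm (f2 x) \<le> M2 / c + (M1 / c)^2" if x: "x \<in> cball 0 3" for x
  proof -
    from b x have q: "c \<le> norm (qf x)" and d1: "norm (deriv qf x) \<le> M1"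
      and d2: "norm (deriv (deriv qf) x) \<le> M2" by auto
    have "norm (f2 x) \<le> norm (deriv (deriv qf) x / qf x) + norm ((deriv qf x / qf x)^2)"
      unfolding f2_def by (rule norm_triangle_ineq4)
    also have "norm (deriv (deriv qf) x / qf x) \<le> M2 / c"
      unfolding norm_divide using q d2 c by (intro frac_le) (auto intro: order_trans[OF norm_ge_zero])
    also have "norm ((deriv qf x / qf x)^2) \<le> (M1 / c)^2"
      unfolding norm_power norm_divide using q d1 c M1
      by (intro power_mono frac_le) auto
    finally show ?thesis by simp
  qed
  with M1 b show ?thesis by blast
qed

lemma head_est:
  fixes z :: complex and a B :: real and N :: nat
  assumes z: "Re z > 0" and a: "a > 0" and Nz: "(real N + a) * norm z \<le> 3"
    and B: "\<forall>x\<in>cball 0 3. norm (f2 x) \<le> B"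
  defines "w \<equiv> \<lambda>m::nat. (of_nat m + complex_of_real a) * z"
  shows "norm (z * (\<Sum>m<N. f1 (w m)) - (HH (w N) - HH (w 0))) \<le> real N * B * norm z ^ 2"
proof -
  define S where "S = {x. Re x > 0} \<inter> cball (0::complex) 3"
  have cvx: "convex S" unfolding S_def by (intro convex_Int convex_halfspace_Re_gt convex_cball)
  have wS: "w m \<in> S" if "m \<le> N" for m
  proof -
    have "Re (w m) = (real m + a) * Re z" by (simp add: w_def)
    then have "Re (w m) > 0" using z a by simp
    moreover have "norm (w m) = (real m + a) * norm z"
    proof -
      have e: "of_nat m + complex_of_real a = complex_of_real (real m + a)" by simp
      have "norm (w m) = norm (complex_of_real (real m + a)) * norm z" by (simp only: w_def e norm_mult)
      also have "norm (complex_of_real (real m + a)) = real m + a"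
        using a by (simp only: norm_of_real abs_of_pos add_nonneg_pos of_nat_0_le_iff)
      finally show ?thesis .
    qed
    moreover have "(real m + a) * norm z \<le> (real N + a) * norm z"
      using that by (intro mult_right_mono) auto
    ultimately show ?thesis using Nz by (simp add: S_def)
  qed
  have step: "norm (HH (w (Suc m)) - HH (w m) - z * f1 (w m)) \<le> B * norm z ^ 2" if "m < N" for m
  proof -
    have "norm (HH (w m + z) - HH (w m) - f1 (w m) * (w m + z - w m)) \<le> B * norm (w m + z - w m)^2"
    proof (rule taylor1[OF cvx])
      fix x assume x: "x \<in> S"
      then have "Re x > 0" "norm x \<le> 3" by (auto simp: S_def)
      have "(HH has_field_derivative (E_times x - 1/x)) (at x)" by (rule HH_deriv) fact
      then show "(HH has_field_derivative f1 x) (at x within S)"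
        using f1_eq[OF \<open>Re x > 0\<close>] by (simp add: f1_def has_field_derivative_at_within)
      show "(f1 has_field_derivative f2 x) (at x within S)"
        using f1_deriv[OF \<open>norm x \<le> 3\<close>] has_field_derivative_at_within by blast
      show "norm (f2 x) \<le> B" using B \<open>norm x \<le> 3\<close> by auto
    next
      show "w m \<in> S" using that by (intro wS) auto
      have "w m + z = w (Suc m)" by (simp add: w_def algebra_simps)
      then show "w m + z \<in> S" using that by (auto intro: wS)
    qed
    moreover have "w m + z = w (Suc m)" by (simp add: w_def algebra_simps)
    ultimately show ?thesis by (simp add: algebra_simps)
  qed
  have "z * (\<Sum>m<N. f1 (w m)) - (HH (w N) - HH (w 0)) =
        - (\<Sum>m<N. HH (w (Suc m)) - HH (w m) - z * f1 (w m))"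
  proof -
    have tel: "(\<Sum>m<N. HH (w (Suc m)) - HH (w m)) = HH (w N) - HH (w 0)" by (rule sum_lessThan_telescope)
    have s1: "(\<Sum>m<N. HH (w (Suc m)) - HH (w m) - z * f1 (w m)) = (\<Sum>m<N. HH (w (Suc m)) - HH (w m)) - (\<Sum>m<N. z * f1 (w m))"
      by (rule sum_subtractf)
    show ?thesis unfolding s1 tel sum_distrib_left by simp
  qed
  then have "norm (z * (\<Sum>m<N. f1 (w m)) - (HH (w N) - HH (w 0))) \<le>
        (\<Sum>m<N. norm (HH (w (Suc m)) - HH (w m) - z * f1 (w m)))"
    by (simp add: norm_sum del: sum_subtractf)
  also have "\<dots> \<le> (\<Sum>m<N. B * norm z ^ 2)" by (intro sum_mono step) auto
  finally show ?thesis by simp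
qed

lemma HH_small:
  assumes w: "Re w > 0" "norm w \<le> 3" and M1: "\<forall>v\<in>cball 0 3. norm (deriv qf v) \<le> M1"
    and small: "M1 * norm w < 1/2"
  shows "norm (HH w) \<le> 2 * M1 * norm w"
proof -
  have wnz: "w \<noteq> 0" using w by auto
  have e: "Re (1 - exp (-w)) > 0" using Re_one_minus_exp[OF w(1)] .
  have "(Re w)^2 + (Im w)^2 > 0" using w(1) by (intro add_pos_nonneg) auto
  then have ri: "Re (inverse w) > 0" using w(1) by simp
  have "Ln (qf w) = Ln ((1 - exp (-w)) * inverse w)" using wnz by (simp add: qf_def divide_inverse)
  also have "\<dots> = Ln (1 - exp (-w)) + Ln (inverse w)"
  proof (rule Ln_times_simple)
    show "1 - exp (-w) \<noteq> 0" using e by auto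
    show "inverse w \<noteq> 0" using wnz by simp
    have "\<bar>Im (Ln (1 - exp (-w)))\<bar> < pi/2" by (rule Re_Ln_pos_lt_imp[OF e])
    moreover have "\<bar>Im (Ln (inverse w))\<bar> < pi/2" by (rule Re_Ln_pos_lt_imp[OF ri])
    ultimately show "- pi < Im (Ln (1 - exp (-w))) + Im (Ln (inverse w))"
      "Im (Ln (1 - exp (-w))) + Im (Ln (inverse w)) \<le> pi" by linarith+
  qed
  also have "Ln (inverse w) = - Ln w" by (rule Ln_inverse[OF Re_pos_not_nonpos[OF w(1)]])
  finally have HHq: "HH w = Ln (qf w)" by (simp add: HH_def)
  have "norm (qf w - qf 0) \<le> M1 * norm (w - 0)"
  proof (rule field_differentiable_bound[OF convex_cball])
    fix x :: complex assume "x \<in> cball 0 3"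
    show "(qf has_field_derivative deriv qf x) (at x within cball 0 3)"
      by (rule holomorphic_derivI[OF qf_holo]) auto
    show "norm (deriv qf x) \<le> M1" using M1 \<open>x \<in> cball 0 3\<close> by auto
  qed (use w in auto)
  then have qb: "norm (qf w - 1) \<le> M1 * norm w" by (simp add: qf_def)
  have "norm (Ln (1 + (qf w - 1))) \<le> 2 * norm (qf w - 1)"
    using qb small by (intro norm_Ln_le) auto
  then show ?thesis using qb HHq by simp
qed




lemma alg_combine:
  fixes z S T Si P pA pa HN G lA Lz H0 :: complex
  assumes "z \<noteq> 0" "S = T + (1/z) * Si + P" "Si = pA - pa" "HN = G - (lA + Lz)"
  shows "z * (S - (- Lz / z - pa / z)) = (z * T + G) + (z * P - (HN - H0)) - H0 + (pA - lA)"
  using assms(1) unfolding assms(2,3,4) by (simp add: field_simps)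

lemma one_minus_exp_ge:
  fixes x :: real assumes "0 < x" "x \<le> 1"
  shows "x / 2 \<le> 1 - exp (-x)"
proof -
  have "1 + x \<le> exp x" by (rule exp_ge_add_one_self)
  then have "exp (-x) \<le> 1 / (1 + x)" using assms by (simp add: exp_minus field_simps)
  moreover have "x / 2 \<le> 1 - 1 / (1 + x)" using assms by (simp add: field_simps)
  ultimately show ?thesis by linarith
qed

lemma Digamma_ln_close:
  fixes A :: real assumes "A > 1"
  shows "\<bar>Digamma A - ln A\<bar> \<le> 1 / (A - 1)"
proof -
  have b: "ln (A - 1) \<le> Digamma A" "Digamma A \<le> ln A" using Digamma_real_bounds[OF assms] by auto
  have "ln (A / (A - 1)) \<le> A / (A - 1) - 1" using assms by (intro ln_le_minus_one) auto
  then have "ln A - ln (A - 1) \<le> 1 / (A - 1)" using assms by (simp add: ln_div field_simps)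
  with b show ?thesis by linarith
qed

lemma norm4:
  fixes X Y H D :: complex
  assumes "norm X \<le> a" "norm Y \<le> b" "norm H \<le> c" "norm D \<le> d"
  shows "norm (X + Y - H + D) \<le> a + b + c + d"
  using norm_triangle_ineq[of "X+Y-H" D] norm_triangle_ineq4[of "X+Y" H] norm_triangle_ineq[of X Y] assms
  by linarith

lemma core_bound:
  fixes \<Delta> a B M1 :: real and z :: complex
  assumes \<Delta>: "\<Delta> > 0" and a: "0 < a" "a \<le> 1"
    and M1: "M1 \<ge> 0" and BM: "\<forall>x\<in>cball 0 3. norm (f2 x) \<le> B \<and> norm (deriv qf x) \<le> M1"
    and zD: "z \<in> sector_D \<Delta>" and zsmall: "norm z < 1/2" "M1 * norm z < 1/2"
  shows "norm ((\<Sum>m. E_times ((of_nat m + complex_of_real a) * z))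
              - (- Ln z / z - Digamma (complex_of_real a) / z))
         \<le> 2 * (1 + \<Delta>) / (1 - exp (- (1 / (1 + \<Delta>))))^2 + 2 * B + 2 * M1 + 2"
proof -
  define w where "w = (\<lambda>m::nat. (of_nat m + complex_of_real a) * z)"
  define \<kappa> where "\<kappa> = 1 - exp (- (1 / (1 + \<Delta>)))"
  have \<kappa>: "\<kappa> > 0" using \<Delta> by (simp add: \<kappa>_def)
  have rz: "Re z > 0" "\<bar>Im z\<bar> \<le> \<Delta> * Re z" using zD by (auto simp: sector_D_def)
  have zne: "z \<noteq> 0" using rz by auto
  have nzp: "norm z > 0" using zne by simp
  have nzRe: "norm z \<le> (1 + \<Delta>) * Re z" using cmod_le[of z] rz by (simp add: algebra_simps)
  have Rele: "Re z \<le> norm z" by (rule complex_Re_le_cmod)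
  define N where "N = nat \<lceil>1 / norm z\<rceil>"
  have Nreal: "real N = of_int \<lceil>1 / norm z\<rceil>"
    using nzp by (simp add: N_def)
  have N1: "1 / norm z \<le> real N" unfolding Nreal by simp
  have N2: "real N \<le> 1 / norm z + 1" unfolding Nreal using ceiling_correct[of "1 / norm z"] by simp
  have Nz1: "1 \<le> real N * norm z" using N1 nzp by (simp add: field_simps)
  have Nz2: "real N * norm z \<le> 1 + norm z" using N2 nzp by (simp add: field_simps)
  have "2 < 1 / norm z" using zsmall nzp by (simp add: field_simps)
  then have N2': "2 \<le> real N" using N1 by linarith
  define A where "A = real N + a"
  have A1: "A > 1" using N2' a by (simp add: A_def)
  have Nc: "(real N + a) * Re z \<ge> 1 / (1 + \<Delta>)"
  proof -
    have "real N * norm z \<le> real N * ((1 + \<Delta>) * Re z)" by (rule mult_left_mono[OF nzRe]) simp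
    then have "1 \<le> real N * ((1 + \<Delta>) * Re z)" using Nz1 by linarith
    then have "1 / (1 + \<Delta>) \<le> real N * Re z" using \<Delta> by (simp add: field_simps)
    also have "\<dots> \<le> (real N + a) * Re z" using a rz by (simp add: algebra_simps)
    finally show ?thesis .
  qed
  have tail: "summable (\<lambda>j. E_times (w (j + N))) \<and>
         norm (z * (\<Sum>j. E_times (w (j + N))) + Ln (1 - exp (- w N)))
           \<le> norm z ^ 2 / \<kappa>^2 / (1 - exp (- Re z))"
    unfolding w_def \<kappa>_def using tail_est[OF rz(1) a(1) _ Nc] \<Delta> by simp
  have "Re z / 2 \<le> 1 - exp (- Re z)" using rz Rele zsmall by (intro one_minus_exp_ge) auto
  then have "norm z ^ 2 / \<kappa>^2 / (1 - exp (- Re z)) \<le> norm z ^ 2 / \<kappa>^2 / (Re z / 2)"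
    using rz \<kappa> by (intro divide_left_mono) auto
  also have "\<dots> = 2 * norm z * (norm z / Re z) / \<kappa>^2" using rz by (simp add: field_simps power2_eq_square)
  also have "\<dots> \<le> 2 * norm z * (1 + \<Delta>) / \<kappa>^2"
    using nzRe rz \<kappa> nzp by (intro divide_right_mono mult_left_mono) (auto simp: field_simps)
  finally have eB: "norm (z * (\<Sum>j. E_times (w (j + N))) + Ln (1 - exp (- w N))) \<le> 2 * (1 + \<Delta>) / \<kappa>^2 * norm z"
    using tail by (simp add: field_simps)
  have summ: "summable (\<lambda>m. E_times (w m))" using tail summable_iff_shift[of "\<lambda>m. E_times (w m)" N] by simp
  have B: "\<forall>x\<in>cball 0 3. norm (f2 x) \<le> B" using BM by auto
  have az: "a * norm z \<le> norm z" using mult_right_mono[OF a(2), of "norm z"] by simp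
  have NA3: "(real N + a) * norm z \<le> 3"
  proof -
    have "(real N + a) * norm z = real N * norm z + a * norm z" by (simp add: algebra_simps)
    then show ?thesis using Nz2 az zsmall by linarith
  qed
  have head: "norm (z * (\<Sum>m<N. f1 (w m)) - (HH (w N) - HH (w 0))) \<le> real N * B * norm z ^ 2"
    unfolding w_def using head_est[OF rz(1) a(1) NA3 B] by simp
  have B0: "B \<ge> 0" using BM by (auto intro: order_trans[OF norm_ge_zero, of "f2 0"])
  have "real N * B * norm z ^ 2 = (real N * norm z) * B * norm z" by (simp add: power2_eq_square)
  also have "\<dots> \<le> 2 * B * norm z" using Nz2 zsmall B0 nzp
    by (intro mult_right_mono) auto
  finally have eA: "norm (z * (\<Sum>m<N. f1 (w m)) - (HH (w N) - HH (w 0))) \<le> 2 * B * norm z"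
    using head by linarith
  have w0: "w 0 = complex_of_real a * z" by (simp add: w_def)
  have nw0: "norm (w 0) = a * norm z" using a by (simp add: w0 norm_mult)
  have "norm (HH (w 0)) \<le> 2 * M1 * norm (w 0)"
  proof (rule HH_small)
    show "Re (w 0) > 0" using a rz by (simp add: w0)
    show "norm (w 0) \<le> 3" using nw0 az zsmall by linarith
    show "\<forall>v\<in>cball 0 3. norm (deriv qf v) \<le> M1" using BM by auto
    have "M1 * norm (w 0) \<le> M1 * norm z" using nw0 a M1 by (simp add: mult_left_le_one_le mult_left_mono)
    then show "M1 * norm (w 0) < 1/2" using zsmall by linarith
  qed
  also have "\<dots> \<le> 2 * M1 * norm z" using nw0 a M1 by (simp add: mult_left_le_one_le mult_left_mono)
  finally have eH: "norm (HH (w 0)) \<le> 2 * M1 * norm z" .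
  have "\<bar>Digamma A - ln A\<bar> \<le> 1 / (A - 1)" by (rule Digamma_ln_close[OF A1])
  also have "1 / (A - 1) \<le> 2 / real N" using N2' a unfolding A_def by (simp add: field_simps)
  also have "2 / real N \<le> 2 * norm z" using N1 nzp N2' by (simp add: field_simps)
  finally have eD: "norm (complex_of_real (Digamma A) - complex_of_real (ln A)) \<le> 2 * norm z"
    by (simp flip: of_real_diff)
  have split: "(\<Sum>m. E_times (w m)) = (\<Sum>j. E_times (w (j + N))) + (\<Sum>m<N. E_times (w m))"
    by (rule suminf_split_initial_segment[OF summ])
  have Rew: "Re (w m) > 0" for m using a rz by (simp add: w_def)
  have "(\<Sum>m<N. E_times (w m)) = (\<Sum>m<N. 1 / w m) + (\<Sum>m<N. f1 (w m))"
    by (simp add: f1_def f1_eq[OF Rew] flip: sum.distrib)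
  also have "(\<Sum>m<N. 1 / w m) = (1 / z) * (\<Sum>m<N. 1 / (of_nat m + complex_of_real a))"
    by (simp add: w_def sum_distrib_left mult.commute)
  finally have Ssplit: "(\<Sum>m. E_times (w m)) = (\<Sum>j. E_times (w (j + N))) +
      (1 / z) * (\<Sum>m<N. 1 / (of_nat m + complex_of_real a)) + (\<Sum>m<N. f1 (w m))"
    using split by simp
  have "Digamma (complex_of_real a + of_nat N) = Digamma (complex_of_real a) + (\<Sum>m<N. 1 / (of_nat m + complex_of_real a))"
    using a by (intro Digamma_shift) simp
  moreover have "Digamma (complex_of_real a + of_nat N) = complex_of_real (Digamma A)"
  proof -
    have "complex_of_real a + of_nat N = complex_of_real A" by (simp add: A_def)
    then show ?thesis using A1 by (simp add: Polygamma_of_real)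
  qed
  ultimately have Si: "(\<Sum>m<N. 1 / (of_nat m + complex_of_real a)) = complex_of_real (Digamma A) - Digamma (complex_of_real a)"
    by simp
  have "w N = complex_of_real A * z" by (simp add: w_def A_def)
  then have "Ln (w N) = complex_of_real (ln A) + Ln z" using A1 zne by (simp add: Ln_times_of_real Ln_of_real)
  then have HN: "HH (w N) = Ln (1 - exp (- w N)) - (complex_of_real (ln A) + Ln z)"
    by (simp add: HH_def)
  have eq: "z * ((\<Sum>m. E_times (w m)) - (- Ln z / z - Digamma (complex_of_real a) / z)) =
      (z * (\<Sum>j. E_times (w (j + N))) + Ln (1 - exp (- w N))) + (z * (\<Sum>m<N. f1 (w m)) - (HH (w N) - HH (w 0)))
      - HH (w 0) + (complex_of_real (Digamma A) - complex_of_real (ln A))"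
    by (rule alg_combine[OF zne Ssplit Si HN])
  define K where "K = 2 * (1 + \<Delta>) / \<kappa>^2 + 2 * B + 2 * M1 + 2"
  have "norm (z * ((\<Sum>m. E_times (w m)) - (- Ln z / z - Digamma (complex_of_real a) / z))) \<le>
     2 * (1 + \<Delta>) / \<kappa>^2 * norm z + 2 * B * norm z + 2 * M1 * norm z + 2 * norm z"
    unfolding eq by (rule norm4[OF eB eA eH eD])
  also have "\<dots> = K * norm z" by (simp add: K_def algebra_simps)
  finally have "norm z * norm ((\<Sum>m. E_times (w m)) - (- Ln z / z - Digamma (complex_of_real a) / z)) \<le> norm z * K"
    by (simp add: norm_mult mult.commute)
  then have "norm ((\<Sum>m. E_times (w m)) - (- Ln z / z - Digamma (complex_of_real a) / z)) \<le> K"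
    using nzp by simp
  then show ?thesis by (simp add: w_def K_def \<kappa>_def)
qed

theorem lemma3p5:
  fixes \<Delta> a :: real
  assumes "\<Delta> > 0" and "0 < a" and "a \<le> 1"
  shows "(\<lambda>z. (\<Sum>m. E_times ((of_nat m + complex_of_real a) * z))
              - (- Ln z / z - Digamma (complex_of_real a) / z))
           \<in> O[at 0 within sector_D \<Delta>](\<lambda>_. 1)"
proof -
  obtain B M1 where M1: "M1 \<ge> 0" and BM: "\<forall>x\<in>cball 0 3. norm (f2 x) \<le> B \<and> norm (deriv qf x) \<le> M1"
    using f2_bound by blast
  define \<delta> where "\<delta> = min (1/2) (1 / (2 * (M1 + 1)))"
  have \<delta>: "\<delta> > 0" using M1 by (simp add: \<delta>_def)
  define K where "K = 2 * (1 + \<Delta>) / (1 - exp (- (1 / (1 + \<Delta>))))^2 + 2 * B + 2 * M1 + 2"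
  have bound: "norm ((\<Sum>m. E_times ((of_nat m + complex_of_real a) * z))
              - (- Ln z / z - Digamma (complex_of_real a) / z)) \<le> K"
    if zD: "z \<in> sector_D \<Delta>" and zd: "norm z < \<delta>" for z
  proof -
    have z1: "norm z < 1/2" using zd by (simp add: \<delta>_def)
    have "norm z < 1 / (2 * (M1 + 1))" using zd by (simp add: \<delta>_def)
    then have "norm z * (2 * (M1 + 1)) < 1" using M1 by (simp add: field_simps)
    moreover have "2 * (M1 * norm z) \<le> norm z * (2 * (M1 + 1))" using norm_ge_zero[of z] by (simp add: algebra_simps)
    ultimately have z2: "M1 * norm z < 1/2" by linarith
    show ?thesis unfolding K_def by (rule core_bound[OF assms M1 BM zD z1 z2])
  qed
  show ?thesis
  proof (rule bigoI[where c = K])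
    show "\<forall>\<^sub>F z in at 0 within sector_D \<Delta>.
      norm ((\<Sum>m. E_times ((of_nat m + complex_of_real a) * z)) - (- Ln z / z - Digamma (complex_of_real a) / z))
        \<le> K * norm (1::complex)"
      unfolding eventually_at using \<delta> bound by (auto simp: dist_norm intro!: exI[of _ \<delta>])
  qed
qed


end
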